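(* Let $p$ and $q$ be probability densities on $\mathbb{R}^d$ with $p\propto e^{-V}$, where $\nabla V$ is $L$-Lipschitz, and $\chi^2(q\|p)<\infty$. Let $\phi=q/p$ and $\psi=\phi/\mathbb{E}_p\phi^2$ (so that $\psi q$ is a probability density). Then $$\mathbb{E}_{\psi q}\big[\|\nabla\ln p(x)\|^2\big]\le\frac{4}{\chi^2(q\|p)+1}\,\mathcal{E}_p\Big(\frac qp\Big)+2dL.$$
   Context: $\chi^2(q\|p)=\int q^2/p-1=\mathbb{E}_p\phi^2-1$. The relative Fisher information is $\mathcal{E}_p(q/p):=\int_{\mathbb{R}^d}\|\nabla (q/p)(x)\|^2p(x)\,dx$. *)

theory Defs
  imports "HOL-Analysis.Analysis"
begin

definition chi2 :: "('a::euclidean_space \<Rightarrow> real) \<Rightarrow> ('a \<Rightarrow> real) \<Rightarrow> real" where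
  "chi2 q p = (LINT x|lborel. (q x)\<^sup>2 / p x) - 1"

text \<open>Relative Fisher information E_p(phi) = int ||grad phi||^2 p, given the gradient field
  of phi (extended-valued, as a nonnegative integral).\<close>
definition rel_fisher :: "('a::euclidean_space \<Rightarrow> real) \<Rightarrow> ('a \<Rightarrow> 'a) \<Rightarrow> ennreal" where
  "rel_fisher p gphi = (\<integral>\<^sup>+ x. ennreal ((norm (gphi x))\<^sup>2 * p x) \<partial>lborel)"

end

theory Submission
  imports Defs
begin


lemma Lip_cont:
  fixes H :: "real \<Rightarrow> real"
  assumes Lip: "\<And>s t. \<bar>H s - H t\<bar> \<le> L * \<bar>s - t\<bar>"
  shows "isCont H t"
proof -
  have L0: "L \<ge> 0" using Lip[of 1 0] abs_ge_zero[of "H 1 - H 0"] by simp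
  have "continuous_on UNIV H"
  proof (rule lipschitz_on_continuous_on)
    show "L-lipschitz_on UNIV H"
      by (rule lipschitz_onI) (auto simp: dist_real_def Lip L0)
  qed
  then show ?thesis by (simp add: continuous_on_eq_continuous_at)
qed

lemma small_s:
  fixes x y K :: real
  assumes "\<And>s. 0 < s \<Longrightarrow> s \<le> 1 \<Longrightarrow> x \<le> y + s * K" "K \<ge> 0"
  shows "x \<le> y"
proof (rule ccontr)
  assume "\<not> x \<le> y"
  define s where "s = min 1 ((x - y) / (2 * (K + 1)))"
  have s: "0 < s" "s \<le> 1" using \<open>\<not> x \<le> y\<close> assms(2) by (auto simp: s_def)
  have "s * K \<le> (x - y) / (2 * (K + 1)) * K"
    using assms(2) by (intro mult_right_mono) (auto simp: s_def)
  also have "\<dots> = (x - y) * (K / (2 * (K + 1)))" by simp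
  also have "\<dots> < (x - y) * 1"
    using \<open>\<not> x \<le> y\<close> assms(2) by (intro mult_strict_left_mono) (auto simp: field_simps)
  also have "\<dots> = x - y" by simp
  finally show False using assms(1)[OF s] by linarith
qed

lemma icm: "(f :: 'a::euclidean_space \<Rightarrow> real) integrable_on S \<Longrightarrow> (\<lambda>x. c * f x) integrable_on S"
  using integrable_cmul[of f S c] by simp

lemma core_s:
  fixes g G v H :: "real \<Rightarrow> real" and a b L B s :: real
  assumes g: "\<And>t. (g has_real_derivative G t) (at t)"
    and v: "\<And>t. (v has_real_derivative H t) (at t)"
    and Lip: "\<And>s t. \<bar>H s - H t\<bar> \<le> L * \<bar>s - t\<bar>"
    and Gint: "(\<lambda>t. (G t)\<^sup>2 * exp (- v t)) integrable_on {a..b}"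
    and GB: "integral {a..b} (\<lambda>t. (G t)\<^sup>2 * exp (- v t)) \<le> B"
    and ab: "a \<le> b" and s: "0 < s" "s \<le> 1"
  shows "integral {a..b} (\<lambda>t. (g t)\<^sup>2 * (H t)\<^sup>2 * exp (- v t)) \<le>
     4 * B + 2 * L * integral {a..b} (\<lambda>t. (g t)\<^sup>2 * exp (- v t))
     + 2 * ((g a)\<^sup>2 * exp (- v a) * \<bar>H a\<bar>) + 2 * ((g b)\<^sup>2 * exp (- v b) * \<bar>H b\<bar>)
     + s * (4 * L * integral {a..b} (\<lambda>t. (g t)\<^sup>2 * exp (- v t) * \<bar>H t\<bar>)
            + 2 * L * ((g a)\<^sup>2 * exp (- v a) + (g b)\<^sup>2 * exp (- v b))
            + L\<^sup>2 * integral {a..b} (\<lambda>t. (g t)\<^sup>2 * exp (- v t)))"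
proof -
  have L0: "L \<ge> 0" using Lip[of 1 0] abs_ge_zero[of "H 1 - H 0"] by simp
  define P where "P = (\<lambda>t. exp (- v t))"
  define vs where "vs = (\<lambda>t. (v (t + s) - v t) / s)"
  define Ds where "Ds = (\<lambda>t. (H (t + s) - H t) / s)"
  define k where "k = (\<lambda>t. (g t)\<^sup>2 * vs t * P t)"
  define k' where "k' = (\<lambda>t. 2 * g t * G t * vs t * P t + (g t)\<^sup>2 * Ds t * P t
       + (g t)\<^sup>2 * vs t * (- H t * P t))"
  define T1 where "T1 = (\<lambda>t. 2 * g t * G t * vs t * P t)"
  define T2 where "T2 = (\<lambda>t. (g t)\<^sup>2 * Ds t * P t)"
  define T3 where "T3 = (\<lambda>t. (g t)\<^sup>2 * vs t * H t * P t)"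
  have cH: "isCont H t" for t by (rule Lip_cont[OF Lip])
  have cg: "isCont g t" for t using g DERIV_isCont by blast
  have cv: "isCont v t" for t using v DERIV_isCont by blast
  have dP: "(P has_real_derivative (- H t * P t)) (at t)" for t
    unfolding P_def by (auto intro!: derivative_eq_intros v)
  have dvs: "(vs has_real_derivative Ds t) (at t)" for t
  proof -
    have "((\<lambda>t. v (t + s)) has_real_derivative H (t + s)) (at t)"
      using v DERIV_shift by blast
    then show ?thesis unfolding vs_def Ds_def
      using s by (auto intro!: derivative_eq_intros v simp: diff_divide_distrib)
  qed
  have dk: "(k has_real_derivative k' t) (at t)" for t
    unfolding k_def k'_def
    by (rule derivative_eq_intros g dvs dP refl | simp add: power2_eq_square)+ (simp add: algebra_simps)
  have ftc: "(k' has_integral (k b - k a)) {a..b}"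
    by (rule fundamental_theorem_of_calculus[OF ab])
       (auto simp: has_real_derivative_iff_has_vector_derivative[symmetric] intro: has_field_derivative_at_within[OF dk])
  have cv': "continuous_on UNIV v" using cv by (simp add: continuous_at_imp_continuous_on)
  have cg': "continuous_on UNIV g" using cg by (simp add: continuous_at_imp_continuous_on)
  have cH': "continuous_on UNIV H" using cH by (simp add: continuous_at_imp_continuous_on)
  have cvsh: "continuous_on UNIV (\<lambda>t. v (t + s))"
    by (rule continuous_on_compose2[OF cv']) (auto intro: continuous_intros)
  have cHsh: "continuous_on UNIV (\<lambda>t. H (t + s))"
    by (rule continuous_on_compose2[OF cH']) (auto intro: continuous_intros)
  have cP: "continuous_on UNIV P" unfolding P_def by (intro continuous_intros cv')
  have cvs: "continuous_on UNIV vs" unfolding vs_def using s by (intro continuous_intros cvsh cv') auto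
  have cDs: "continuous_on UNIV Ds" unfolding Ds_def using s by (intro continuous_intros cHsh cH') auto
  have intc: "f integrable_on {a..b}" if "continuous_on UNIV f" for f :: "real \<Rightarrow> real"
    by (rule integrable_continuous_real) (rule continuous_on_subset[OF that], simp)
  have iT2: "T2 integrable_on {a..b}" unfolding T2_def by (intro intc continuous_intros cg' cDs cP)
  have iT3: "T3 integrable_on {a..b}" unfolding T3_def by (intro intc continuous_intros cg' cvs cH' cP)
  have iA: "(\<lambda>t. (g t)\<^sup>2 * (H t)\<^sup>2 * P t) integrable_on {a..b}" by (intro intc continuous_intros cg' cH' cP)
  have iE1: "(\<lambda>t. (g t)\<^sup>2 * P t * \<bar>H t\<bar>) integrable_on {a..b}" by (intro intc continuous_intros cg' cH' cP)
  have iC: "(\<lambda>t. (g t)\<^sup>2 * P t) integrable_on {a..b}" by (intro intc continuous_intros cg' cP)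
  have iJ: "(\<lambda>t. (g t)\<^sup>2 * (vs t)\<^sup>2 * P t) integrable_on {a..b}" by (intro intc continuous_intros cg' cvs cP)
  have k'eq: "T1 t = k' t - T2 t + T3 t" for t unfolding T1_def T2_def T3_def k'_def by (simp add: algebra_simps)
  have hT1: "(T1 has_integral ((k b - k a) - integral {a..b} T2 + integral {a..b} T3)) {a..b}"
    unfolding k'eq[abs_def]
    by (intro has_integral_add has_integral_diff ftc integrable_integral iT2 iT3)
  then have iT1: "T1 integrable_on {a..b}" and I1: "integral {a..b} T1 = (k b - k a) - integral {a..b} T2 + integral {a..b} T3"
    by (auto simp: has_integral_iff)
  have Ppos: "P t > 0" for t unfolding P_def by simp
  have young: "T1 t \<le> (1/2) * ((g t)\<^sup>2 * (vs t)\<^sup>2 * P t) + 2 * ((G t)\<^sup>2 * P t)" for t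
  proof -
    have "2 * (g t * vs t) * G t \<le> (1/2) * (g t * vs t)\<^sup>2 + 2 * (G t)\<^sup>2"
      using sum_squares_ge_zero[of "g t * vs t - 2 * G t" 0] by (simp add: power2_eq_square algebra_simps)
    then have "(2 * (g t * vs t) * G t) * P t \<le> ((1/2) * (g t * vs t)\<^sup>2 + 2 * (G t)\<^sup>2) * P t"
      using Ppos[of t] by (intro mult_right_mono) auto
    then show ?thesis unfolding T1_def by (simp add: algebra_simps power_mult_distrib)
  qed
  have Ds_le: "Ds t \<le> L" for t
  proof -
    have "H (t + s) - H t \<le> L * s" using Lip[of "t+s" t] s by simp
    then show ?thesis unfolding Ds_def using s by (simp add: divide_le_eq)
  qed
  have vsH: "\<bar>vs t - H t\<bar> \<le> L * s" for t
  proof -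
    obtain z where z: "t < z" "z < t + s" "v (t + s) - v t = (t + s - t) * H z"
      using MVT2[of t "t+s" v H] v s by auto
    have "vs t = H z" unfolding vs_def using z(3) s by simp
    moreover have "\<bar>H z - H t\<bar> \<le> L * s"
      using Lip[of z t] z L0 by (smt (verit, best) mult_left_mono)
    ultimately show ?thesis by simp
  qed
  define A where "A = integral {a..b} (\<lambda>t. (g t)\<^sup>2 * (H t)\<^sup>2 * P t)"
  define E1 where "E1 = integral {a..b} (\<lambda>t. (g t)\<^sup>2 * P t * \<bar>H t\<bar>)"
  define C where "C = integral {a..b} (\<lambda>t. (g t)\<^sup>2 * P t)"
  define J where "J = integral {a..b} (\<lambda>t. (g t)\<^sup>2 * (vs t)\<^sup>2 * P t)"
  define IG where "IG = integral {a..b} (\<lambda>t. (G t)\<^sup>2 * P t)"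
  have C0: "C \<ge> 0" unfolding C_def using Ppos by (intro integral_nonneg iC) (simp add: less_imp_le)
  have "integral {a..b} (\<lambda>t. (g t)\<^sup>2 * (H t)\<^sup>2 * P t - s * L * ((g t)\<^sup>2 * P t * \<bar>H t\<bar>)) \<le> integral {a..b} T3"
  proof (rule integral_le)
    show "(\<lambda>t. (g t)\<^sup>2 * (H t)\<^sup>2 * P t - s * L * ((g t)\<^sup>2 * P t * \<bar>H t\<bar>)) integrable_on {a..b}"
      by (intro integrable_diff icm iA iE1)
    show "T3 integrable_on {a..b}" by (rule iT3)
    fix t
    have "H t * H t - s * L * \<bar>H t\<bar> \<le> vs t * H t"
    proof -
      have "\<bar>(vs t - H t) * H t\<bar> \<le> L * s * \<bar>H t\<bar>" using vsH[of t] by (simp add: abs_mult mult_right_mono)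
      then show ?thesis by (simp add: algebra_simps abs_le_iff)
    qed
    then have "(H t * H t - s * L * \<bar>H t\<bar>) * ((g t)\<^sup>2 * P t) \<le> (vs t * H t) * ((g t)\<^sup>2 * P t)"
      using Ppos[of t] by (intro mult_right_mono) auto
    then show "(g t)\<^sup>2 * (H t)\<^sup>2 * P t - s * L * ((g t)\<^sup>2 * P t * \<bar>H t\<bar>) \<le> T3 t"
      unfolding T3_def by (simp add: algebra_simps power2_eq_square)
  qed
  moreover have "integral {a..b} (\<lambda>t. (g t)\<^sup>2 * (H t)\<^sup>2 * P t - s * L * ((g t)\<^sup>2 * P t * \<bar>H t\<bar>)) = A - s * L * E1"
    unfolding A_def E1_def by (subst integral_diff) (auto intro: icm iA iE1)
  ultimately have I3ge: "A - s * L * E1 \<le> integral {a..b} T3" by simp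
  have "J \<le> integral {a..b} (\<lambda>t. (g t)\<^sup>2 * (H t)\<^sup>2 * P t + (2 * L * s) * ((g t)\<^sup>2 * P t * \<bar>H t\<bar>) + (L * s)\<^sup>2 * ((g t)\<^sup>2 * P t))"
    unfolding J_def
  proof (rule integral_le[OF iJ])
    show "(\<lambda>t. (g t)\<^sup>2 * (H t)\<^sup>2 * P t + (2 * L * s) * ((g t)\<^sup>2 * P t * \<bar>H t\<bar>) + (L * s)\<^sup>2 * ((g t)\<^sup>2 * P t)) integrable_on {a..b}"
      by (intro integrable_add icm iA iE1 iC)
    fix t
    have "\<bar>vs t\<bar> \<le> \<bar>H t\<bar> + L * s" using vsH[of t] by linarith
    then have "(vs t)\<^sup>2 \<le> (\<bar>H t\<bar> + L * s)\<^sup>2"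
      by (metis abs_ge_zero power2_abs power_mono)
    also have "\<dots> = (H t)\<^sup>2 + 2 * L * s * \<bar>H t\<bar> + (L * s)\<^sup>2" by (simp add: power2_eq_square algebra_simps)
    finally have "(vs t)\<^sup>2 * ((g t)\<^sup>2 * P t) \<le> ((H t)\<^sup>2 + 2 * L * s * \<bar>H t\<bar> + (L * s)\<^sup>2) * ((g t)\<^sup>2 * P t)"
      using Ppos[of t] by (intro mult_right_mono) auto
    then show "(g t)\<^sup>2 * (vs t)\<^sup>2 * P t \<le> (g t)\<^sup>2 * (H t)\<^sup>2 * P t + (2 * L * s) * ((g t)\<^sup>2 * P t * \<bar>H t\<bar>) + (L * s)\<^sup>2 * ((g t)\<^sup>2 * P t)"
      by (simp add: algebra_simps)
  qed
  then have Jle: "J \<le> A + 2 * L * s * E1 + (L * s)\<^sup>2 * C"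
  proof -
    have "integral {a..b} (\<lambda>t. (g t)\<^sup>2 * (H t)\<^sup>2 * P t + (2 * L * s) * ((g t)\<^sup>2 * P t * \<bar>H t\<bar>) + (L * s)\<^sup>2 * ((g t)\<^sup>2 * P t))
       = A + (2 * L * s) * E1 + (L * s)\<^sup>2 * C"
      unfolding A_def E1_def C_def
      by (simp add: integral_add integrable_add icm iA iE1 iC)
    with \<open>J \<le> _\<close> show ?thesis by simp
  qed
  have I1le: "integral {a..b} T1 \<le> (1/2) * J + 2 * IG"
  proof -
    have "integral {a..b} T1 \<le> integral {a..b} (\<lambda>t. (1/2) * ((g t)\<^sup>2 * (vs t)\<^sup>2 * P t) + 2 * ((G t)\<^sup>2 * P t))"
      using young Gint unfolding P_def by (intro integral_le iT1[unfolded P_def] integrable_add icm iJ[unfolded P_def]) auto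
    then show ?thesis unfolding J_def IG_def using Gint unfolding P_def
      by (simp add: integral_add icm iJ[unfolded P_def])
  qed
  have I2le: "integral {a..b} T2 \<le> L * C"
  proof -
    have "integral {a..b} T2 \<le> integral {a..b} (\<lambda>t. L * ((g t)\<^sup>2 * P t))"
    proof (rule integral_le[OF iT2])
      show "(\<lambda>t. L * ((g t)\<^sup>2 * P t)) integrable_on {a..b}" by (intro icm iC)
      fix t
      have "Ds t * ((g t)\<^sup>2 * P t) \<le> L * ((g t)\<^sup>2 * P t)"
        using Ppos[of t] Ds_le[of t] by (intro mult_right_mono) auto
      then show "T2 t \<le> L * ((g t)\<^sup>2 * P t)" unfolding T2_def by (simp add: algebra_simps)
    qed
    then show ?thesis unfolding C_def by simp
  qed
  have ka: "k a \<le> (g a)\<^sup>2 * P a * (\<bar>H a\<bar> + L * s)"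
  proof -
    have "vs a \<le> \<bar>H a\<bar> + L * s" using vsH[of a] by linarith
    then have "vs a * ((g a)\<^sup>2 * P a) \<le> (\<bar>H a\<bar> + L * s) * ((g a)\<^sup>2 * P a)"
      using Ppos[of a] by (intro mult_right_mono) auto
    then show ?thesis unfolding k_def by (simp add: algebra_simps)
  qed
  have kb: "- k b \<le> (g b)\<^sup>2 * P b * (\<bar>H b\<bar> + L * s)"
  proof -
    have "- vs b \<le> \<bar>H b\<bar> + L * s" using vsH[of b] by linarith
    then have "(- vs b) * ((g b)\<^sup>2 * P b) \<le> (\<bar>H b\<bar> + L * s) * ((g b)\<^sup>2 * P b)"
      using Ppos[of b] by (intro mult_right_mono) auto
    then show ?thesis unfolding k_def by (simp add: algebra_simps)
  qed
  have IGB: "IG \<le> B" using GB unfolding IG_def P_def .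
  have ssq: "(L * s)\<^sup>2 * C \<le> L\<^sup>2 * s * C"
  proof -
    have "(L * s)\<^sup>2 * C = L\<^sup>2 * s * (s * C)" by (simp add: power2_eq_square)
    also have "\<dots> \<le> L\<^sup>2 * s * (1 * C)" using s C0 by (intro mult_left_mono mult_right_mono) auto
    finally show ?thesis by simp
  qed
  have main: "A \<le> 4 * B + 2 * L * C + 2 * ((g a)\<^sup>2 * P a * \<bar>H a\<bar>) + 2 * ((g b)\<^sup>2 * P b * \<bar>H b\<bar>)
     + s * (4 * L * E1 + 2 * L * ((g a)\<^sup>2 * P a + (g b)\<^sup>2 * P b) + L\<^sup>2 * C)"
    using I3ge Jle I1 I1le I2le ka kb IGB ssq by (simp add: algebra_simps)
  then show ?thesis unfolding A_def C_def E1_def P_def by (simp add: algebra_simps)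
qed


lemma core:
  fixes g G v H :: "real \<Rightarrow> real" and a b L B :: real
  assumes g: "\<And>t. (g has_real_derivative G t) (at t)"
    and v: "\<And>t. (v has_real_derivative H t) (at t)"
    and Lip: "\<And>s t. \<bar>H s - H t\<bar> \<le> L * \<bar>s - t\<bar>"
    and Gint: "(\<lambda>t. (G t)\<^sup>2 * exp (- v t)) integrable_on {a..b}"
    and GB: "integral {a..b} (\<lambda>t. (G t)\<^sup>2 * exp (- v t)) \<le> B"
    and ab: "a \<le> b"
  shows "integral {a..b} (\<lambda>t. (g t)\<^sup>2 * (H t)\<^sup>2 * exp (- v t)) \<le>
     4 * B + 2 * L * integral {a..b} (\<lambda>t. (g t)\<^sup>2 * exp (- v t))
     + 2 * ((g a)\<^sup>2 * exp (- v a) * \<bar>H a\<bar>) + 2 * ((g b)\<^sup>2 * exp (- v b) * \<bar>H b\<bar>)"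
proof (rule small_s)
  let ?K = "4 * L * integral {a..b} (\<lambda>t. (g t)\<^sup>2 * exp (- v t) * \<bar>H t\<bar>)
            + 2 * L * ((g a)\<^sup>2 * exp (- v a) + (g b)\<^sup>2 * exp (- v b))
            + L\<^sup>2 * integral {a..b} (\<lambda>t. (g t)\<^sup>2 * exp (- v t))"
  show "0 \<le> \<bar>?K\<bar>" by simp
  fix s :: real assume s: "0 < s" "s \<le> 1"
  have "s * ?K \<le> s * \<bar>?K\<bar>" using s by (intro mult_left_mono) auto
  then show "integral {a..b} (\<lambda>t. (g t)\<^sup>2 * (H t)\<^sup>2 * exp (- v t)) \<le>
     4 * B + 2 * L * integral {a..b} (\<lambda>t. (g t)\<^sup>2 * exp (- v t))
     + 2 * ((g a)\<^sup>2 * exp (- v a) * \<bar>H a\<bar>) + 2 * ((g b)\<^sup>2 * exp (- v b) * \<bar>H b\<bar>) + s * \<bar>?K\<bar>"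
    using core_s[OF g v Lip Gint GB ab s] by linarith
qed

lemma nn_sup_Icc:
  fixes f :: "real \<Rightarrow> ennreal"
  assumes [measurable]: "f \<in> borel_measurable borel"
    and le: "\<And>n::nat. (\<integral>\<^sup>+x. f x * indicator {- real n..real n} x \<partial>lborel) \<le> c"
  shows "(\<integral>\<^sup>+x. f x \<partial>lborel) \<le> c"
proof -
  have inc: "incseq (\<lambda>n x. f x * indicator {- real n..real n} x)"
    by (intro monoI le_funI mult_left_mono) (auto simp: indicator_def)
  have eq: "(SUP n. f x * indicator {- real n..real n} x) = f x" for x
  proof (rule antisym)
    show "(SUP n. f x * indicator {- real n..real n} x) \<le> f x"
      by (intro SUP_least) (auto simp: indicator_def)
    obtain n :: nat where "\<bar>x\<bar> \<le> real n" using real_arch_simple by blast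
    then have "f x = f x * indicator {- real n..real n} x" by (auto simp: indicator_def)
    also have "\<dots> \<le> (SUP n. f x * indicator {- real n..real n} x)" by (rule SUP_upper) simp
    finally show "f x \<le> (SUP n. f x * indicator {- real n..real n} x)" .
  qed
  have "(\<integral>\<^sup>+x. f x \<partial>lborel) = (\<integral>\<^sup>+x. (SUP n. f x * indicator {- real n..real n} x) \<partial>lborel)"
    by (simp add: eq)
  also have "\<dots> = (SUP n. \<integral>\<^sup>+x. f x * indicator {- real n..real n} x \<partial>lborel)"
    by (rule nn_integral_monotone_convergence_SUP[OF inc]) simp
  also have "\<dots> \<le> c" by (intro SUP_least le)
  finally show ?thesis .
qed

lemma tail:
  fixes F H :: "real \<Rightarrow> real"
  assumes F0: "\<And>t. F t \<ge> 0" and Fm [measurable]: "F \<in> borel_measurable borel"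
    and Ffin: "(\<integral>\<^sup>+t. ennreal (F t) \<partial>lborel) \<noteq> \<infinity>"
    and Hb: "\<And>t. \<bar>H t\<bar> \<le> M * (1 + \<bar>t\<bar>)" and M: "M > 0" and e: "e > 0"
  shows "\<exists>b\<ge>T. F b * \<bar>H b\<bar> \<le> e"
proof (rule ccontr)
  assume "\<not> ?thesis"
  then have big: "\<And>b. b \<ge> T \<Longrightarrow> F b * \<bar>H b\<bar> > e" by force
  define T0 where "T0 = max T 0"
  obtain C' where C': "(\<integral>\<^sup>+t. ennreal (F t) \<partial>lborel) = ennreal C'" "C' \<ge> 0"
    using Ffin by (cases "\<integral>\<^sup>+t. ennreal (F t) \<partial>lborel" rule: ennreal_cases) auto
  have lowb: "e / M / (1 + t) \<le> F t" if "t \<ge> T0" for t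
  proof -
    have t: "t \<ge> T" "t \<ge> 0" using that by (auto simp: T0_def)
    have "e < F t * \<bar>H t\<bar>" using big t by auto
    also have "\<dots> \<le> F t * (M * (1 + t))" using Hb[of t] F0[of t] t by (intro mult_left_mono) auto
    finally have "e \<le> F t * (M * (1 + t))" by simp
    moreover have "M * (1 + t) > 0" using M t by simp
    ultimately have "e / (M * (1 + t)) \<le> F t" by (simp add: pos_divide_le_eq)
    then show ?thesis by (simp add: divide_divide_eq_left)
  qed
  define X where "X = exp (C' * M / e + ln (1 + T0) + 1)"
  have X: "X \<ge> T0"
  proof -
    have "1 + T0 \<le> exp (ln (1 + T0) + 1)"
    proof -
      have "exp (ln (1+T0) + 1) = (1+T0) * exp 1" by (simp add: exp_add T0_def)
      moreover have "(1+T0)*1 \<le> (1+T0)*exp 1" by (intro mult_left_mono) (auto simp: T0_def)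
      ultimately show ?thesis by simp
    qed
    also have "\<dots> \<le> X" unfolding X_def using C' M e by simp
    finally show ?thesis by simp
  qed
  have "(\<integral>\<^sup>+t. ennreal (e / M / (1 + t)) * indicator {T0..X} t \<partial>lborel)
        = ennreal (e / M * ln (1 + X) - e / M * ln (1 + T0))"
  proof (rule nn_integral_FTC_Icc)
    show "(\<lambda>t. e / M / (1 + t)) \<in> borel_measurable borel" by measurable
    fix t assume t: "t \<in> {T0..X}"
    then have "1 + t > 0" by (auto simp: T0_def)
    then show "((\<lambda>t. e / M * ln (1 + t)) has_real_derivative e / M / (1 + t)) (at t)"
      using M by (auto intro!: derivative_eq_intros)
    show "0 \<le> e / M / (1 + t)" using \<open>1 + t > 0\<close> M e by simp
  qed (rule X)
  moreover have "(\<integral>\<^sup>+t. ennreal (e / M / (1 + t)) * indicator {T0..X} t \<partial>lborel) \<le> (\<integral>\<^sup>+t. ennreal (F t) \<partial>lborel)"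
    by (intro nn_integral_mono) (auto simp: indicator_def intro!: ennreal_leI lowb[unfolded divide_divide_eq_left])
  ultimately have "ennreal (e / M * ln (1 + X) - e / M * ln (1 + T0)) \<le> (\<integral>\<^sup>+t. ennreal (F t) \<partial>lborel)"
    by simp
  then have "e / M * ln (1 + X) - e / M * ln (1 + T0) \<le> C'"
    using C' by simp
  moreover have "ln (1 + X) > C' * M / e + ln (1 + T0)"
  proof -
    have "ln X = C' * M / e + ln (1 + T0) + 1" unfolding X_def by simp
    moreover have "X > 0" unfolding X_def by simp
    then have "ln X < ln (1 + X)" by simp
    ultimately show ?thesis by simp
  qed
  ultimately show False using M e by (simp add: field_simps)
qed

lemma oneD:
  fixes g G v H :: "real \<Rightarrow> real" and L :: real
  assumes g: "\<And>t. (g has_real_derivative G t) (at t)"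
    and v: "\<And>t. (v has_real_derivative H t) (at t)"
    and Lip: "\<And>s t. \<bar>H s - H t\<bar> \<le> L * \<bar>s - t\<bar>"
    and Gm [measurable]: "G \<in> borel_measurable borel"
    and Cfin: "(\<integral>\<^sup>+t. ennreal ((g t)\<^sup>2 * exp (- v t)) \<partial>lborel) \<noteq> \<infinity>"
  shows "(\<integral>\<^sup>+t. ennreal ((g t)\<^sup>2 * (H t)\<^sup>2 * exp (- v t)) \<partial>lborel)
    \<le> 4 * (\<integral>\<^sup>+t. ennreal ((G t)\<^sup>2 * exp (- v t)) \<partial>lborel)
      + ennreal (2 * L) * (\<integral>\<^sup>+t. ennreal ((g t)\<^sup>2 * exp (- v t)) \<partial>lborel)"
proof (cases "(\<integral>\<^sup>+t. ennreal ((G t)\<^sup>2 * exp (- v t)) \<partial>lborel) = \<infinity>")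
  case True
  then show ?thesis by (simp add: ennreal_mult_eq_top_iff)
next
  case False
  obtain B' where B': "(\<integral>\<^sup>+t. ennreal ((G t)\<^sup>2 * exp (- v t)) \<partial>lborel) = ennreal B'" "B' \<ge> 0"
    using False by (cases "\<integral>\<^sup>+t. ennreal ((G t)\<^sup>2 * exp (- v t)) \<partial>lborel" rule: ennreal_cases) auto
  obtain C' where C': "(\<integral>\<^sup>+t. ennreal ((g t)\<^sup>2 * exp (- v t)) \<partial>lborel) = ennreal C'" "C' \<ge> 0"
    using Cfin by (cases "\<integral>\<^sup>+t. ennreal ((g t)\<^sup>2 * exp (- v t)) \<partial>lborel" rule: ennreal_cases) auto
  have L0: "L \<ge> 0" using Lip[of 1 0] abs_ge_zero[of "H 1 - H 0"] by simp
  have cH: "continuous_on UNIV H" using Lip_cont[OF Lip] by (simp add: continuous_at_imp_continuous_on)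
  have cg: "continuous_on UNIV g" using g DERIV_isCont by (blast intro: continuous_at_imp_continuous_on)
  have cv: "continuous_on UNIV v" using v DERIV_isCont by (blast intro: continuous_at_imp_continuous_on)
  have [measurable]: "H \<in> borel_measurable borel" "g \<in> borel_measurable borel" "v \<in> borel_measurable borel"
    using cH cg cv by (auto intro: borel_measurable_continuous_onI)
  define F where "F = (\<lambda>t. (g t)\<^sup>2 * exp (- v t))"
  have [measurable]: "F \<in> borel_measurable borel" unfolding F_def by measurable
  have F0: "F t \<ge> 0" for t unfolding F_def by simp
  define M where "M = \<bar>H 0\<bar> + L + 1"
  have M: "M > 0" using L0 by (simp add: M_def)
  have Hb: "\<bar>H t\<bar> \<le> M * (1 + \<bar>t\<bar>)" for t
  proof -
    have "\<bar>H t\<bar> \<le> \<bar>H 0\<bar> + L * \<bar>t\<bar>" using Lip[of t 0] by simp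
    also have "\<dots> \<le> M * (1 + \<bar>t\<bar>)" using L0 by (simp add: M_def algebra_simps)
    finally show ?thesis .
  qed
  have key: "(\<integral>\<^sup>+t. ennreal ((g t)\<^sup>2 * (H t)\<^sup>2 * exp (- v t)) * indicator {a..b} t \<partial>lborel)
     \<le> ennreal (4 * B' + 2 * L * C' + 2 * (F a * \<bar>H a\<bar>) + 2 * (F b * \<bar>H b\<bar>))" if ab: "a \<le> b" for a b
  proof -
    define f where "f = (\<lambda>t. indicator {a..b} t * ((G t)\<^sup>2 * exp (- v t)))"
    have [measurable]: "f \<in> borel_measurable borel" unfolding f_def by measurable
    have "(\<integral>\<^sup>+t. ennreal (f t) \<partial>lborel) \<le> (\<integral>\<^sup>+t. ennreal ((G t)\<^sup>2 * exp (- v t)) \<partial>lborel)"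
      unfolding f_def by (intro nn_integral_mono) (auto simp: indicator_def)
    then obtain r where r: "(\<integral>\<^sup>+t. ennreal (f t) \<partial>lborel) = ennreal r" "r \<ge> 0" "r \<le> B'"
      using B' by (cases "\<integral>\<^sup>+t. ennreal (f t) \<partial>lborel" rule: ennreal_cases) (auto simp: top_unique)
    have "(f has_integral r) UNIV"
      proof (rule nn_integral_has_integral)
      show "f \<in> borel_measurable borel" by measurable
      show "0 \<le> f x" for x unfolding f_def by simp
    qed (use r in auto)
    moreover have "f = (\<lambda>t. if t \<in> {a..b} then (G t)\<^sup>2 * exp (- v t) else 0)" unfolding f_def by (rule ext) (simp add: indicator_def)
    ultimately have hG: "((\<lambda>t. (G t)\<^sup>2 * exp (- v t)) has_integral r) {a..b}"
      using has_integral_restrict_UNIV[of "{a..b}" "\<lambda>t. (G t)\<^sup>2 * exp (- v t)" r] by simp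
    have Gint: "(\<lambda>t. (G t)\<^sup>2 * exp (- v t)) integrable_on {a..b}" using hG by blast
    have GB: "integral {a..b} (\<lambda>t. (G t)\<^sup>2 * exp (- v t)) \<le> B'" using hG r by (simp add: integral_unique)
    have intc: "f integrable_on {a..b}" if "continuous_on UNIV f" for f :: "real \<Rightarrow> real"
      by (rule integrable_continuous_real) (rule continuous_on_subset[OF that], simp)
    have iC: "(\<lambda>t. (g t)\<^sup>2 * exp (- v t)) integrable_on {a..b}" by (intro intc continuous_intros cg cv)
    have iA: "(\<lambda>t. (g t)\<^sup>2 * (H t)\<^sup>2 * exp (- v t)) integrable_on {a..b}" by (intro intc continuous_intros cg cv cH)
    have "(\<integral>\<^sup>+t. ennreal (indicator {a..b} t * ((g t)\<^sup>2 * exp (- v t))) \<partial>lborel) = integral {a..b} (\<lambda>t. (g t)\<^sup>2 * exp (- v t))"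
      by (rule nn_integral_has_integral_lebesgue) (auto intro: integrable_integral iC)
    moreover have "(\<integral>\<^sup>+t. ennreal (indicator {a..b} t * ((g t)\<^sup>2 * exp (- v t))) \<partial>lborel) \<le> ennreal C'"
      unfolding C'(1)[symmetric] by (intro nn_integral_mono) (auto simp: indicator_def)
    ultimately have Cab: "integral {a..b} (\<lambda>t. (g t)\<^sup>2 * exp (- v t)) \<le> C'" using C'(2) by simp
    have "(\<integral>\<^sup>+t. ennreal ((g t)\<^sup>2 * (H t)\<^sup>2 * exp (- v t)) * indicator {a..b} t \<partial>lborel)
        = (\<integral>\<^sup>+t. ennreal (indicator {a..b} t * ((g t)\<^sup>2 * (H t)\<^sup>2 * exp (- v t))) \<partial>lborel)"
      by (intro nn_integral_cong) (auto simp: indicator_def)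
    also have "\<dots> = integral {a..b} (\<lambda>t. (g t)\<^sup>2 * (H t)\<^sup>2 * exp (- v t))"
      by (rule nn_integral_has_integral_lebesgue) (auto intro: integrable_integral iA)
    also have "\<dots> \<le> 4 * B' + 2 * L * integral {a..b} (\<lambda>t. (g t)\<^sup>2 * exp (- v t))
     + 2 * ((g a)\<^sup>2 * exp (- v a) * \<bar>H a\<bar>) + 2 * ((g b)\<^sup>2 * exp (- v b) * \<bar>H b\<bar>)"
      by (intro ennreal_leI core[OF g v Lip Gint GB ab])
    also have "\<dots> \<le> 4 * B' + 2 * L * C' + 2 * (F a * \<bar>H a\<bar>) + 2 * (F b * \<bar>H b\<bar>)"
      using Cab L0 unfolding F_def by (intro ennreal_leI) (simp add: mult_left_mono)
    finally show ?thesis .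
  qed
  have Fref: "(\<integral>\<^sup>+t. ennreal (F (- t)) \<partial>lborel) \<noteq> \<infinity>"
  proof -
    have "(\<integral>\<^sup>+t. ennreal (F t) \<partial>lborel) = (\<integral>\<^sup>+t. ennreal (F (- t)) \<partial>lborel)"
      using nn_integral_real_affine[of "\<lambda>t. ennreal (F t)" "-1" 0] by simp
    then show ?thesis using Cfin unfolding F_def by simp
  qed
  have eps: "(\<integral>\<^sup>+t. ennreal ((g t)\<^sup>2 * (H t)\<^sup>2 * exp (- v t)) \<partial>lborel) \<le> ennreal (4 * B' + 2 * L * C' + 4 * e)"
    if e: "e > 0" for e
  proof (rule nn_sup_Icc)
    fix n :: nat
    have Cfin': "(\<integral>\<^sup>+t. ennreal (F t) \<partial>lborel) \<noteq> \<infinity>" using Cfin by (simp add: F_def)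
    have "\<exists>b\<ge>real n. F b * \<bar>H b\<bar> \<le> e"
      by (rule tail[where F=F and H=H and M=M]) (use F0 Cfin' Hb M e in auto)
    then obtain b where b: "b \<ge> real n" "F b * \<bar>H b\<bar> \<le> e" by blast
    have "\<exists>b\<ge>real n. F (- b) * \<bar>H (- b)\<bar> \<le> e"
    proof (rule tail[where F="\<lambda>t. F (- t)" and H="\<lambda>t. H (- t)" and M=M])
      show "(\<lambda>t. F (- t)) \<in> borel_measurable borel" by measurable
      show "\<bar>H (- t)\<bar> \<le> M * (1 + \<bar>t\<bar>)" for t using Hb[of "- t"] by simp
    qed (use F0 Fref M e in auto)
    then obtain a' where a': "a' \<ge> real n" "F (- a') * \<bar>H (- a')\<bar> \<le> e" by blast
    have "(\<integral>\<^sup>+t. ennreal ((g t)\<^sup>2 * (H t)\<^sup>2 * exp (- v t)) * indicator {- real n..real n} t \<partial>lborel)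
       \<le> (\<integral>\<^sup>+t. ennreal ((g t)\<^sup>2 * (H t)\<^sup>2 * exp (- v t)) * indicator {- a'..b} t \<partial>lborel)"
      using a' b by (intro nn_integral_mono mult_left_mono) (auto simp: indicator_def)
    also have "\<dots> \<le> ennreal (4 * B' + 2 * L * C' + 2 * (F (- a') * \<bar>H (- a')\<bar>) + 2 * (F b * \<bar>H b\<bar>))"
      using a' b by (intro key) auto
    also have "\<dots> \<le> ennreal (4 * B' + 2 * L * C' + 4 * e)"
      using a' b by (intro ennreal_leI) auto
    finally show "(\<integral>\<^sup>+t. ennreal ((g t)\<^sup>2 * (H t)\<^sup>2 * exp (- v t)) * indicator {- real n..real n} t \<partial>lborel)
       \<le> ennreal (4 * B' + 2 * L * C' + 4 * e)" .
  qed measurable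
  have rhs: "4 * (\<integral>\<^sup>+t. ennreal ((G t)\<^sup>2 * exp (- v t)) \<partial>lborel)
      + ennreal (2 * L) * (\<integral>\<^sup>+t. ennreal ((g t)\<^sup>2 * exp (- v t)) \<partial>lborel) = ennreal (4 * B' + 2 * L * C')"
    using B' C' L0 by (simp add: ennreal_mult ennreal_plus[symmetric])
  show ?thesis unfolding rhs
  proof (rule ennreal_le_epsilon)
    fix e :: real assume e: "0 < e"
    have "(\<integral>\<^sup>+t. ennreal ((g t)\<^sup>2 * (H t)\<^sup>2 * exp (- v t)) \<partial>lborel) \<le> ennreal (4 * B' + 2 * L * C' + 4 * (e/4))"
      using e by (intro eps) simp
    also have "\<dots> = ennreal (4 * B' + 2 * L * C') + ennreal e"
      using B' C' L0 e by (subst ennreal_plus[symmetric]) (auto intro: add_nonneg_nonneg)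
    finally show "(\<integral>\<^sup>+t. ennreal ((g t)\<^sup>2 * (H t)\<^sup>2 * exp (- v t)) \<partial>lborel) \<le> ennreal (4 * B' + 2 * L * C') + ennreal e" .
  qed
qed



lemma fubini_dir:
  fixes \<Phi> :: "'a::euclidean_space \<Rightarrow> ennreal" and e :: 'a
  assumes e: "e \<in> Basis" and [measurable]: "\<Phi> \<in> borel_measurable borel"
  shows "(\<integral>\<^sup>+x. \<Phi> x \<partial>lborel) = (\<integral>\<^sup>+y. (\<integral>\<^sup>+t. \<Phi> ((\<Sum>b\<in>Basis-{e}. y b *\<^sub>R b) + t *\<^sub>R e) \<partial>lborel)
      \<partial>(Pi\<^sub>M (Basis - {e}) (\<lambda>_. lborel)))"
proof -
  interpret P: product_sigma_finite "\<lambda>_::'a. lborel::real measure"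
    by standard
  have "(\<integral>\<^sup>+x. \<Phi> x \<partial>lborel) = (\<integral>\<^sup>+\<omega>. \<Phi> (\<Sum>b\<in>Basis. \<omega> b *\<^sub>R b) \<partial>(Pi\<^sub>M Basis (\<lambda>_. lborel)))"
    by (subst lborel_eq) (simp add: nn_integral_distr)
  also have "\<dots> = (\<integral>\<^sup>+\<omega>. \<Phi> (\<Sum>b\<in>Basis. \<omega> b *\<^sub>R b) \<partial>(Pi\<^sub>M (insert e (Basis - {e})) (\<lambda>_. lborel)))"
    using e by (simp add: insert_absorb)
  also have "\<dots> = (\<integral>\<^sup>+y. (\<integral>\<^sup>+t. \<Phi> (\<Sum>b\<in>Basis. (y(e := t)) b *\<^sub>R b) \<partial>lborel) \<partial>(Pi\<^sub>M (Basis - {e}) (\<lambda>_. lborel)))"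
    by (rule P.product_nn_integral_insert) (use e in \<open>auto simp: insert_absorb\<close>)
  also have "\<dots> = (\<integral>\<^sup>+y. (\<integral>\<^sup>+t. \<Phi> ((\<Sum>b\<in>Basis-{e}. y b *\<^sub>R b) + t *\<^sub>R e) \<partial>lborel) \<partial>(Pi\<^sub>M (Basis - {e}) (\<lambda>_. lborel)))"
  proof -
    have "(\<Sum>b\<in>Basis. (y(e := t)) b *\<^sub>R b) = (\<Sum>b\<in>Basis-{e}. y b *\<^sub>R b) + t *\<^sub>R e" for y t
    proof -
      have "(\<Sum>b\<in>Basis. (y(e := t)) b *\<^sub>R b) = (y(e := t)) e *\<^sub>R e + (\<Sum>b\<in>Basis-{e}. (y(e := t)) b *\<^sub>R b)"
        using e by (simp add: sum.remove)
      also have "(\<Sum>b\<in>Basis-{e}. (y(e := t)) b *\<^sub>R b) = (\<Sum>b\<in>Basis-{e}. y b *\<^sub>R b)"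
        by (rule sum.cong) auto
      finally show ?thesis by simp
    qed
    then show ?thesis by simp
  qed
  finally show ?thesis .
qed

lemma line_deriv:
  fixes f :: "'a::euclidean_space \<Rightarrow> real"
  assumes "\<And>x. (f has_derivative (\<lambda>h. D x \<bullet> h)) (at x)"
  shows "((\<lambda>t. f (x0 + t *\<^sub>R e)) has_real_derivative (D (x0 + t *\<^sub>R e) \<bullet> e)) (at t)"
proof -
  have l: "((\<lambda>t. x0 + t *\<^sub>R e) has_derivative (\<lambda>h. h *\<^sub>R e)) (at t)"
    by (auto intro!: derivative_eq_intros)
  have "((\<lambda>t. f (x0 + t *\<^sub>R e)) has_derivative (\<lambda>h. D (x0 + t *\<^sub>R e) \<bullet> (h *\<^sub>R e))) (at t)"
    using has_derivative_compose[OF l assms] by (simp add: o_def)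
  then show ?thesis unfolding has_field_derivative_def
    by (rule has_derivative_eq_rhs) (auto simp: fun_eq_iff mult.commute)
qed

lemma dir:
  fixes V phi :: "'a::euclidean_space \<Rightarrow> real" and gradV gphi :: "'a \<Rightarrow> 'a" and e :: 'a and L :: real
  assumes V_grad: "\<And>x. (V has_derivative (\<lambda>h. gradV x \<bullet> h)) (at x)"
    and Lip: "\<And>x y. norm (gradV x - gradV y) \<le> L * norm (x - y)"
    and phi_grad: "\<And>x. (phi has_derivative (\<lambda>h. gphi x \<bullet> h)) (at x)"
    and gm [measurable]: "(\<lambda>x. gphi x \<bullet> e) \<in> borel_measurable borel"
    and e: "e \<in> Basis"
    and Cfin: "(\<integral>\<^sup>+x. ennreal ((phi x)\<^sup>2 * exp (- V x)) \<partial>lborel) \<noteq> \<infinity>"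
  shows "(\<integral>\<^sup>+x. ennreal ((phi x)\<^sup>2 * (gradV x \<bullet> e)\<^sup>2 * exp (- V x)) \<partial>lborel)
    \<le> 4 * (\<integral>\<^sup>+x. ennreal ((gphi x \<bullet> e)\<^sup>2 * exp (- V x)) \<partial>lborel)
      + ennreal (2 * L) * (\<integral>\<^sup>+x. ennreal ((phi x)\<^sup>2 * exp (- V x)) \<partial>lborel)"
proof -
  have L0: "L \<ge> 0"
  proof -
    obtain b :: 'a where "b \<in> Basis" using nonempty_Basis by blast
    then have "norm b = 1" by simp
    then show ?thesis using Lip[of b 0] by simp (meson norm_ge_zero order_trans)
  qed
  have cgV: "continuous_on UNIV gradV"
    by (rule lipschitz_on_continuous_on[where L=L], rule lipschitz_onI) (auto simp: dist_norm Lip L0)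
  have cV: "continuous_on UNIV V" using V_grad has_derivative_continuous
    by (blast intro: continuous_at_imp_continuous_on)
  have cphi: "continuous_on UNIV phi" using phi_grad has_derivative_continuous
    by (blast intro: continuous_at_imp_continuous_on)
  have [measurable]: "V \<in> borel_measurable borel" "phi \<in> borel_measurable borel" "gradV \<in> borel_measurable borel"
    using cV cphi cgV by (auto intro: borel_measurable_continuous_onI)
  let ?M = "Pi\<^sub>M (Basis - {e}) (\<lambda>_::'a. lborel::real measure)"
  let ?S = "\<lambda>y. (\<Sum>b\<in>Basis-{e}. y b *\<^sub>R b)"
  interpret P: product_sigma_finite "\<lambda>_::'a. lborel::real measure" by standard
  interpret PM: sigma_finite_measure ?M by (rule P.sigma_finite) auto
  define IA where "IA = (\<lambda>y. \<integral>\<^sup>+t. ennreal ((phi (?S y + t *\<^sub>R e))\<^sup>2 * (gradV (?S y + t *\<^sub>R e) \<bullet> e)\<^sup>2 * exp (- V (?S y + t *\<^sub>R e))) \<partial>lborel)"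
  define IG where "IG = (\<lambda>y. \<integral>\<^sup>+t. ennreal ((gphi (?S y + t *\<^sub>R e) \<bullet> e)\<^sup>2 * exp (- V (?S y + t *\<^sub>R e))) \<partial>lborel)"
  define IC where "IC = (\<lambda>y. \<integral>\<^sup>+t. ennreal ((phi (?S y + t *\<^sub>R e))\<^sup>2 * exp (- V (?S y + t *\<^sub>R e))) \<partial>lborel)"
  have mIG: "IG \<in> borel_measurable ?M" unfolding IG_def by measurable
  have mIC: "IC \<in> borel_measurable ?M" unfolding IC_def by measurable
  have A: "(\<integral>\<^sup>+x. ennreal ((phi x)\<^sup>2 * (gradV x \<bullet> e)\<^sup>2 * exp (- V x)) \<partial>lborel) = integral\<^sup>N ?M IA"
    unfolding IA_def by (rule fubini_dir[OF e]) measurable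
  have G: "(\<integral>\<^sup>+x. ennreal ((gphi x \<bullet> e)\<^sup>2 * exp (- V x)) \<partial>lborel) = integral\<^sup>N ?M IG"
    unfolding IG_def by (rule fubini_dir[OF e]) measurable
  have C: "(\<integral>\<^sup>+x. ennreal ((phi x)\<^sup>2 * exp (- V x)) \<partial>lborel) = integral\<^sup>N ?M IC"
    unfolding IC_def by (rule fubini_dir[OF e]) measurable
  have ae: "AE y in ?M. IC y \<noteq> \<infinity>"
    by (rule nn_integral_PInf_AE[OF mIC]) (use Cfin C in simp)
  have ptw: "IA y \<le> 4 * IG y + ennreal (2 * L) * IC y" if "IC y \<noteq> \<infinity>" for y
    unfolding IA_def IG_def IC_def
  proof (rule oneD)
    fix t
    show "((\<lambda>t. phi (?S y + t *\<^sub>R e)) has_real_derivative (gphi (?S y + t *\<^sub>R e) \<bullet> e)) (at t)"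
      by (rule line_deriv[OF phi_grad])
    show "((\<lambda>t. V (?S y + t *\<^sub>R e)) has_real_derivative (gradV (?S y + t *\<^sub>R e) \<bullet> e)) (at t)"
      by (rule line_deriv[OF V_grad])
  next
    fix s t :: real
    have "\<bar>gradV (?S y + s *\<^sub>R e) \<bullet> e - gradV (?S y + t *\<^sub>R e) \<bullet> e\<bar>
        = \<bar>(gradV (?S y + s *\<^sub>R e) - gradV (?S y + t *\<^sub>R e)) \<bullet> e\<bar>" by (simp add: inner_diff_left)
    also have "\<dots> \<le> norm (gradV (?S y + s *\<^sub>R e) - gradV (?S y + t *\<^sub>R e))"
      using e by (rule Basis_le_norm)
    also have "\<dots> \<le> L * norm ((?S y + s *\<^sub>R e) - (?S y + t *\<^sub>R e))" by (rule Lip)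
    also have "norm ((?S y + s *\<^sub>R e) - (?S y + t *\<^sub>R e)) = \<bar>s - t\<bar>"
      using e by (simp add: scaleR_diff_left[symmetric])
    finally show "\<bar>gradV (?S y + s *\<^sub>R e) \<bullet> e - gradV (?S y + t *\<^sub>R e) \<bullet> e\<bar> \<le> L * \<bar>s - t\<bar>" .
  next
    show "(\<lambda>t. gphi (?S y + t *\<^sub>R e) \<bullet> e) \<in> borel_measurable borel" by measurable
  next
    show "(\<integral>\<^sup>+t. ennreal ((phi (?S y + t *\<^sub>R e))\<^sup>2 * exp (- V (?S y + t *\<^sub>R e))) \<partial>lborel) \<noteq> \<infinity>"
      using that unfolding IC_def .
  qed
  have "integral\<^sup>N ?M IA \<le> integral\<^sup>N ?M (\<lambda>y. 4 * IG y + ennreal (2 * L) * IC y)"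
    by (rule nn_integral_mono_AE) (use ae ptw in auto)
  also have "\<dots> = 4 * integral\<^sup>N ?M IG + ennreal (2 * L) * integral\<^sup>N ?M IC"
    using mIG mIC by (simp add: nn_integral_add nn_integral_cmult)
  finally show ?thesis using A G C by simp
qed

lemma grad_meas:
  fixes f :: "'a::euclidean_space \<Rightarrow> real"
  assumes fd: "\<And>x. (f has_derivative (\<lambda>h. D x \<bullet> h)) (at x)"
  shows "(\<lambda>x. D x \<bullet> b) \<in> borel_measurable borel"
proof (rule borel_measurable_LIMSEQ_real)
  have cf: "continuous_on UNIV f" using fd has_derivative_continuous
    by (blast intro: continuous_at_imp_continuous_on)
  define u where "u = (\<lambda>n::nat. \<lambda>x. (f (x + inverse (real (Suc n)) *\<^sub>R b) - f x) / inverse (real (Suc n)))"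
  show "(\<lambda>n. u n x) \<longlonglongrightarrow> D x \<bullet> b" for x
  proof -
    have d: "((\<lambda>t. f (x + t *\<^sub>R b)) has_real_derivative (D (x + 0 *\<^sub>R b) \<bullet> b)) (at 0)"
      by (rule line_deriv[OF fd])
    then have lim: "((\<lambda>h. (f (x + h *\<^sub>R b) - f x) / h) \<longlongrightarrow> D x \<bullet> b) (at 0)"
      unfolding DERIV_def by simp
    have s: "filterlim (\<lambda>n. inverse (real (Suc n))) (at 0) sequentially"
      unfolding filterlim_at
      using LIMSEQ_inverse_real_of_nat by auto
    show ?thesis unfolding u_def using filterlim_compose[OF lim s] by (simp add: o_def)
  qed
  show "u n \<in> borel_measurable borel" for n
  proof -
    have "continuous_on UNIV (\<lambda>x. f (x + inverse (real (Suc n)) *\<^sub>R b))"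
      by (rule continuous_on_compose2[OF cf]) (auto intro: continuous_intros)
    then show ?thesis unfolding u_def
      by (intro borel_measurable_continuous_onI continuous_intros cf) auto
  qed
qed

theorem corollary2:
  fixes V :: "'a::euclidean_space \<Rightarrow> real"
    and gradV :: "'a \<Rightarrow> 'a"
    and p q :: "'a \<Rightarrow> real"
    and gphi :: "'a \<Rightarrow> 'a"
    and L :: real
  assumes V_grad: "\<And>x. (V has_derivative (\<lambda>h. gradV x \<bullet> h)) (at x)"
    and gradV_Lip: "\<And>x y. norm (gradV x - gradV y) \<le> L * norm (x - y)"
    and Z_int: "integrable lborel (\<lambda>x. exp (- V x))"
    and p_def: "p = (\<lambda>x. exp (- V x) / (LINT y|lborel. exp (- V y)))"
    and q_meas: "q \<in> borel_measurable lborel"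
    and q_nonneg: "\<And>x. q x \<ge> 0"
    and q_int: "integrable lborel q"
    and q_norm: "(LINT x|lborel. q x) = 1"
    and chi2_fin: "integrable lborel (\<lambda>x. (q x)\<^sup>2 / p x)"
    and phi_grad: "\<And>x. ((\<lambda>y. q y / p y) has_derivative (\<lambda>h. gphi x \<bullet> h)) (at x)"
  shows "(\<integral>\<^sup>+ x. ennreal ((q x / p x) / (LINT y|lborel. (q y / p y)\<^sup>2 * p y) * q x
              * (norm (- gradV x))\<^sup>2) \<partial>lborel)
         \<le> ennreal (4 / (chi2 q p + 1)) * rel_fisher p gphi
            + ennreal (2 * real DIM('a) * L)"
proof -
  define Z where "Z = (LINT y|lborel. exp (- V y))"
  have Z0: "Z > 0"
  proof -
    have "Z \<ge> 0" unfolding Z_def by simp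
    moreover have "Z \<noteq> 0"
    proof
      assume "Z = 0"
      then have "AE x in lborel. exp (- V x) = 0"
        using integral_nonneg_eq_0_iff_AE[OF Z_int] unfolding Z_def by simp
      then have "AE x in (lborel::'a measure). False" by simp
      then have "ae_filter (lborel::'a measure) = bot" using trivial_limit_def by blast
      then show False by (simp add: ae_filter_eq_bot_iff)
    qed
    ultimately show ?thesis by simp
  qed
  define W where "W = (\<lambda>x. V x + ln Z)"
  have pW: "p x = exp (- W x)" for x
    using Z0 unfolding p_def W_def Z_def[symmetric] by (simp add: exp_diff exp_minus field_simps)
  have p0: "p x > 0" for x using pW by simp
  have W_grad: "(W has_derivative (\<lambda>h. gradV x \<bullet> h)) (at x)" for x
    unfolding W_def using V_grad[of x] by (auto intro!: derivative_eq_intros)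
  define phi where "phi = (\<lambda>x. q x / p x)"
  have phi_grad': "(phi has_derivative (\<lambda>h. gphi x \<bullet> h)) (at x)" for x
    unfolding phi_def by (rule phi_grad)
  have gm: "(\<lambda>x. gphi x \<bullet> b) \<in> borel_measurable borel" for b
    by (rule grad_meas[OF phi_grad'])
  have cphi: "continuous_on UNIV phi" using phi_grad' has_derivative_continuous
    by (blast intro: continuous_at_imp_continuous_on)
  have cW: "continuous_on UNIV W" using W_grad has_derivative_continuous
    by (blast intro: continuous_at_imp_continuous_on)
  have L0: "L \<ge> 0"
  proof -
    obtain b :: 'a where "b \<in> Basis" using nonempty_Basis by blast
    then have "norm b = 1" by simp
    then show ?thesis using gradV_Lip[of b 0] by simp (meson norm_ge_zero order_trans)
  qed
  have cgV: "continuous_on UNIV gradV"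
    by (rule lipschitz_on_continuous_on[where L=L], rule lipschitz_onI) (auto simp: dist_norm gradV_Lip L0)
  have [measurable]: "W \<in> borel_measurable borel" "phi \<in> borel_measurable borel" "gradV \<in> borel_measurable borel"
    using cW cphi cgV by (auto intro: borel_measurable_continuous_onI)
  have [measurable]: "(\<lambda>x. gphi x \<bullet> b) \<in> borel_measurable borel" for b by (rule gm)
  define N where "N = (LINT y|lborel. (q y / p y)\<^sup>2 * p y)"
  have eqN: "(q y / p y)\<^sup>2 * p y = (q y)\<^sup>2 / p y" for y using p0[of y] by (simp add: power2_eq_square)
  have N_chi: "chi2 q p + 1 = N" unfolding chi2_def N_def eqN by simp
  have intN: "integrable lborel (\<lambda>y. (phi y)\<^sup>2 * exp (- W y))"
    using chi2_fin unfolding phi_def pW[symmetric] eqN .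
  have N_nn: "(\<integral>\<^sup>+x. ennreal ((phi x)\<^sup>2 * exp (- W x)) \<partial>lborel) = ennreal N"
    unfolding N_def phi_def pW[symmetric]
    by (rule nn_integral_eq_integral) (use intN in \<open>auto simp: phi_def pW\<close>)
  have N0: "N > 0"
  proof -
    have "N \<ge> 0" unfolding N_def using p0 by (intro integral_nonneg_AE) (simp add: less_imp_le)
    moreover have "N \<noteq> 0"
    proof
      assume "N = 0"
      then have "AE x in lborel. (q x)\<^sup>2 / p x = 0"
        using integral_nonneg_eq_0_iff_AE[OF chi2_fin] p0 unfolding N_def eqN
        by (simp add: less_imp_le)
      then have "AE x in lborel. q x = 0"
      proof eventually_elim
        case (elim x)
        then show ?case using p0[of x] by simp
      qed
      then have "(LINT x|lborel. q x) = 0" by (simp add: integral_eq_zero_AE)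
      then show False using q_norm by simp
    qed
    ultimately show ?thesis by simp
  qed
  have Cfin: "(\<integral>\<^sup>+x. ennreal ((phi x)\<^sup>2 * exp (- W x)) \<partial>lborel) \<noteq> \<infinity>" using N_nn by simp
  define C where "C = (\<integral>\<^sup>+x. ennreal ((phi x)\<^sup>2 * exp (- W x)) \<partial>lborel)"
  define Gb where "Gb = (\<lambda>b. \<integral>\<^sup>+x. ennreal ((gphi x \<bullet> b)\<^sup>2 * exp (- W x)) \<partial>lborel)"
  define Ab where "Ab = (\<lambda>b. \<integral>\<^sup>+x. ennreal ((phi x)\<^sup>2 * (gradV x \<bullet> b)\<^sup>2 * exp (- W x)) \<partial>lborel)"
  have dirb: "Ab b \<le> 4 * Gb b + ennreal (2 * L) * C" if "b \<in> Basis" for b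
    unfolding Ab_def Gb_def C_def by (rule dir[OF W_grad gradV_Lip phi_grad' gm that Cfin])
  have nsq: "(norm v)\<^sup>2 = (\<Sum>b\<in>Basis. (v \<bullet> b)\<^sup>2)" for v :: 'a
  proof -
    have "(norm v)\<^sup>2 = v \<bullet> v" by (simp add: power2_norm_eq_inner)
    also have "\<dots> = (\<Sum>b\<in>Basis. (v \<bullet> b) * (v \<bullet> b))" by (rule euclidean_inner)
    finally show ?thesis by (simp add: power2_eq_square)
  qed
  define K where "K = (\<integral>\<^sup>+x. ennreal ((phi x)\<^sup>2 * (norm (gradV x))\<^sup>2 * exp (- W x)) \<partial>lborel)"
  have K: "K = (\<Sum>b\<in>Basis. Ab b)"
  proof -
    have "K = (\<integral>\<^sup>+x. (\<Sum>b\<in>Basis. ennreal ((phi x)\<^sup>2 * (gradV x \<bullet> b)\<^sup>2 * exp (- W x))) \<partial>lborel)"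
      unfolding K_def nsq by (intro nn_integral_cong) (simp add: sum_distrib_left sum_distrib_right)
    also have "\<dots> = (\<Sum>b\<in>Basis. Ab b)" unfolding Ab_def by (rule nn_integral_sum) auto
    finally show ?thesis .
  qed
  have RF: "rel_fisher p gphi = (\<Sum>b\<in>Basis. Gb b)"
  proof -
    have "rel_fisher p gphi = (\<integral>\<^sup>+x. (\<Sum>b\<in>Basis. ennreal ((gphi x \<bullet> b)\<^sup>2 * exp (- W x))) \<partial>lborel)"
      unfolding rel_fisher_def nsq pW by (intro nn_integral_cong) (simp add: sum_distrib_left sum_distrib_right)
    also have "\<dots> = (\<Sum>b\<in>Basis. Gb b)" unfolding Gb_def by (rule nn_integral_sum) auto
    finally show ?thesis .
  qed
  have "K \<le> (\<Sum>b\<in>Basis. 4 * Gb b + ennreal (2 * L) * C)"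
    unfolding K by (rule sum_mono) (rule dirb)
  also have "\<dots> = 4 * rel_fisher p gphi + of_nat DIM('a) * (ennreal (2 * L) * C)"
    unfolding RF by (simp add: sum.distrib sum_distrib_left)
  also have "\<dots> = 4 * rel_fisher p gphi + ennreal (2 * real DIM('a) * L * N)"
    unfolding C_def N_nn using L0 N0
    by (simp add: ennreal_mult[symmetric] ennreal_of_nat_eq_real_of_nat mult.assoc mult.left_commute)
  finally have Kle: "K \<le> 4 * rel_fisher p gphi + ennreal (2 * real DIM('a) * L * N)" .
  have LHS: "(\<integral>\<^sup>+ x. ennreal ((q x / p x) / (LINT y|lborel. (q y / p y)\<^sup>2 * p y) * q x
              * (norm (- gradV x))\<^sup>2) \<partial>lborel) = ennreal (1 / N) * K"
  proof -
    have "(\<integral>\<^sup>+ x. ennreal ((q x / p x) / (LINT y|lborel. (q y / p y)\<^sup>2 * p y) * q x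
              * (norm (- gradV x))\<^sup>2) \<partial>lborel)
       = (\<integral>\<^sup>+ x. ennreal (1 / N) * ennreal ((phi x)\<^sup>2 * (norm (gradV x))\<^sup>2 * exp (- W x)) \<partial>lborel)"
    proof (intro nn_integral_cong)
      fix x
      have "q x = phi x * p x" unfolding phi_def using p0[of x] by simp
      then have "(q x / p x) / N * q x * (norm (- gradV x))\<^sup>2 = (1 / N) * ((phi x)\<^sup>2 * (norm (gradV x))\<^sup>2 * exp (- W x))"
        unfolding phi_def pW by (simp add: power2_eq_square)
      then show "ennreal ((q x / p x) / (LINT y|lborel. (q y / p y)\<^sup>2 * p y) * q x * (norm (- gradV x))\<^sup>2)
          = ennreal (1 / N) * ennreal ((phi x)\<^sup>2 * (norm (gradV x))\<^sup>2 * exp (- W x))"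
        using N0 unfolding N_def[symmetric] by (simp add: ennreal_mult[symmetric])
    qed
    also have "\<dots> = ennreal (1 / N) * K" unfolding K_def by (rule nn_integral_cmult) measurable
    finally show ?thesis .
  qed
  have "ennreal (1 / N) * K \<le> ennreal (1 / N) * (4 * rel_fisher p gphi + ennreal (2 * real DIM('a) * L * N))"
    by (rule mult_left_mono[OF Kle]) simp
  also have "\<dots> = ennreal (4 / N) * rel_fisher p gphi + ennreal (2 * real DIM('a) * L)"
  proof -
    have "ennreal (4 / N) = ennreal ((1 / N) * 4)" by simp
    also have "\<dots> = ennreal (1 / N) * ennreal 4" using N0 by (intro ennreal_mult) auto
    finally have a: "ennreal (1 / N) * 4 = ennreal (4 / N)" by simp
    have b: "ennreal (1 / N) * ennreal (2 * real DIM('a) * L * N) = ennreal (2 * real DIM('a) * L)"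
      using N0 L0 by (simp add: ennreal_mult[symmetric])
    show ?thesis by (simp add: distrib_left a b mult.assoc[symmetric])
  qed
  finally show ?thesis using LHS N_chi by simp
qed


end
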